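(* Let $p\in\{1,2\}$, let $s\ge 1$ be an integer ($s\ge 2$ if $p=2$), let $\varepsilon\ge0$, and let the coefficients $\omega_0,\omega_1,b_j,\mu_j,\gamma_j,c_j$ and $\beta^p(s,\varepsilon)$ be as in the context. Let $A\in\mathbb{R}^{n\times n}$ be symmetric and negative semidefinite with spectral radius $\rho$, and let $\Delta t>0$ satisfy $\Delta t\rho\le\beta^p(s,\varepsilon)$. Let $\bm{r}_1,\dots,\bm{r}_s\in\mathbb{R}^n$ and for $k=1,\dots,s$ define $$\bm{d}_k=\sum_{j=1}^k\frac{b_k}{b_j}U_{k-j}(\omega_0I+\omega_1\Delta tA)(\mu_j+\gamma_j)\bm{r}_j,\qquad \tilde{\bm{d}}_k=\sum_{j=1}^k\frac{b_k}{b_j}U_{k-j}(\omega_0I+\omega_1\Delta tA)\mu_j\bm{r}_j.$$ Then: (i) $\|\bm{d}_k\|_2\le c_k\max_{j=1,\dots,k}\|\bm{r}_j\|_2$; (ii) $\|\tilde{\bm{d}}_k\|_2\le C_k\max_{j=1,\dots,k}\|\bm{r}_j\|_2$, where $C_k=c_k$ if $p=1$, and if $p=2$, $C_k$ is a constant independent of $A$, $\Delta t$ and the $\bm{r}_j$ (the paper describes it as a small constant).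
   Context: Chebyshev polynomials: $T_0(x)=1$, $T_1(x)=x$, $T_j=2xT_{j-1}-T_{j-2}$; $U_0(x)=1$, $U_1(x)=2x$, $U_j=2xU_{j-1}-U_{j-2}$. RKC coefficients: $\omega_0=1+\varepsilon/s^2$. If $p=1$: $\omega_1=T_s(\omega_0)/T_s'(\omega_0)$, $b_j=1/T_j(\omega_0)$, $j=0,\dots,s$. If $p=2$: $\omega_1=T_s'(\omega_0)/T_s''(\omega_0)$, $b_j=T_j''(\omega_0)/T_j'(\omega_0)^2$ for $j=2,\dots,s$, $b_0=b_1=b_2$. Then $a_j=1-b_jT_j(\omega_0)$; $\mu_1=b_1\omega_1$, $\gamma_1=0$; for $j\ge2$: $\mu_j=2\omega_1b_j/b_{j-1}$, $\nu_j=2\omega_0b_j/b_{j-1}$, $\kappa_j=-b_j/b_{j-2}$, $\gamma_j=-\mu_ja_{j-1}$. $c_0=0$, $c_1=\mu_1$, $c_j=\nu_jc_{j-1}+\kappa_jc_{j-2}+\mu_j+\gamma_j$. Stability bounds: $\beta^1(s,\varepsilon)=(2-\tfrac43\varepsilon)s^2$, $\beta^2(s,\varepsilon)=\tfrac23(1-\tfrac{2}{15}\varepsilon)(s^2-1)$. *)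

theory Defs
  imports "HOL-Analysis.Analysis"
begin

fun cheb_T :: "nat \<Rightarrow> real \<Rightarrow> real" where
  "cheb_T 0 x = 1"
| "cheb_T (Suc 0) x = x"
| "cheb_T (Suc (Suc j)) x = 2 * x * cheb_T (Suc j) x - cheb_T j x"

fun cheb_U :: "nat \<Rightarrow> real \<Rightarrow> real" where
  "cheb_U 0 x = 1"
| "cheb_U (Suc 0) x = 2 * x"
| "cheb_U (Suc (Suc j)) x = 2 * x * cheb_U (Suc j) x - cheb_U j x"

fun cheb_U_mat :: "nat \<Rightarrow> real^'n^'n \<Rightarrow> real^'n^'n" where
  "cheb_U_mat 0 M = mat 1"
| "cheb_U_mat (Suc 0) M = 2 *\<^sub>R M"
| "cheb_U_mat (Suc (Suc j)) M = 2 *\<^sub>R (M ** cheb_U_mat (Suc j) M) - cheb_U_mat j M"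

definition cheb_T' :: "nat \<Rightarrow> real \<Rightarrow> real" where
  "cheb_T' j x = deriv (cheb_T j) x"

definition cheb_T'' :: "nat \<Rightarrow> real \<Rightarrow> real" where
  "cheb_T'' j x = deriv (deriv (cheb_T j)) x"

definition rkc_omega0 :: "nat \<Rightarrow> real \<Rightarrow> real" where
  "rkc_omega0 s eps = 1 + eps / (real s)^2"

definition rkc_omega1 :: "nat \<Rightarrow> nat \<Rightarrow> real \<Rightarrow> real" where
  "rkc_omega1 p s eps =
     (if p = 1 then cheb_T s (rkc_omega0 s eps) / cheb_T' s (rkc_omega0 s eps)
      else cheb_T' s (rkc_omega0 s eps) / cheb_T'' s (rkc_omega0 s eps))"

definition rkc_b :: "nat \<Rightarrow> nat \<Rightarrow> real \<Rightarrow> nat \<Rightarrow> real" where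
  "rkc_b p s eps j =
     (if p = 1 then 1 / cheb_T j (rkc_omega0 s eps)
      else (let i = max j 2 in
              cheb_T'' i (rkc_omega0 s eps) / (cheb_T' i (rkc_omega0 s eps))^2))"

definition rkc_a :: "nat \<Rightarrow> nat \<Rightarrow> real \<Rightarrow> nat \<Rightarrow> real" where
  "rkc_a p s eps j = 1 - rkc_b p s eps j * cheb_T j (rkc_omega0 s eps)"

text \<open>mu_j, defined for j \<ge> 1 (value at j = 0 is irrelevant and set to 0).\<close>
definition rkc_mu :: "nat \<Rightarrow> nat \<Rightarrow> real \<Rightarrow> nat \<Rightarrow> real" where
  "rkc_mu p s eps j =
     (if j = 0 then 0
      else if j = 1 then rkc_b p s eps 1 * rkc_omega1 p s eps
      else 2 * rkc_omega1 p s eps * rkc_b p s eps j / rkc_b p s eps (j - 1))"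

definition rkc_nu :: "nat \<Rightarrow> nat \<Rightarrow> real \<Rightarrow> nat \<Rightarrow> real" where
  "rkc_nu p s eps j = 2 * rkc_omega0 s eps * rkc_b p s eps j / rkc_b p s eps (j - 1)"

definition rkc_kappa :: "nat \<Rightarrow> nat \<Rightarrow> real \<Rightarrow> nat \<Rightarrow> real" where
  "rkc_kappa p s eps j = - rkc_b p s eps j / rkc_b p s eps (j - 2)"

definition rkc_gamma :: "nat \<Rightarrow> nat \<Rightarrow> real \<Rightarrow> nat \<Rightarrow> real" where
  "rkc_gamma p s eps j =
     (if j \<le> 1 then 0 else - rkc_mu p s eps j * rkc_a p s eps (j - 1))"

fun rkc_c :: "nat \<Rightarrow> nat \<Rightarrow> real \<Rightarrow> nat \<Rightarrow> real" where
  "rkc_c p s eps 0 = 0"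
| "rkc_c p s eps (Suc 0) = rkc_mu p s eps 1"
| "rkc_c p s eps (Suc (Suc j)) =
     rkc_nu p s eps (Suc (Suc j)) * rkc_c p s eps (Suc j)
     + rkc_kappa p s eps (Suc (Suc j)) * rkc_c p s eps j
     + rkc_mu p s eps (Suc (Suc j)) + rkc_gamma p s eps (Suc (Suc j))"

definition rkc_beta :: "nat \<Rightarrow> nat \<Rightarrow> real \<Rightarrow> real" where
  "rkc_beta p s eps =
     (if p = 1 then (2 - 4/3 * eps) * (real s)^2
      else 2/3 * (1 - 2/15 * eps) * ((real s)^2 - 1))"

definition complexify_mat :: "real^'n^'n \<Rightarrow> complex^'n^'n" where
  "complexify_mat A = (\<chi> i j. complex_of_real (A $ i $ j))"

definition spec_radius :: "real^'n^'n \<Rightarrow> real" where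
  "spec_radius A = Sup {cmod z | z. \<exists>v :: complex^'n. v \<noteq> 0 \<and> complexify_mat A *v v = z *s v}"

definition rkc_M :: "nat \<Rightarrow> nat \<Rightarrow> real \<Rightarrow> real \<Rightarrow> real^'n^'n \<Rightarrow> real^'n^'n" where
  "rkc_M p s eps dt A = rkc_omega0 s eps *\<^sub>R mat 1 + (rkc_omega1 p s eps * dt) *\<^sub>R A"

definition rkc_d :: "nat \<Rightarrow> nat \<Rightarrow> real \<Rightarrow> real \<Rightarrow> real^'n^'n \<Rightarrow> (nat \<Rightarrow> real^'n) \<Rightarrow> nat \<Rightarrow> real^'n" where
  "rkc_d p s eps dt A r k =
     (\<Sum>j = 1..k. (rkc_b p s eps k / rkc_b p s eps j * (rkc_mu p s eps j + rkc_gamma p s eps j))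
        *\<^sub>R (cheb_U_mat (k - j) (rkc_M p s eps dt A) *v r j))"

definition rkc_dtilde :: "nat \<Rightarrow> nat \<Rightarrow> real \<Rightarrow> real \<Rightarrow> real^'n^'n \<Rightarrow> (nat \<Rightarrow> real^'n) \<Rightarrow> nat \<Rightarrow> real^'n" where
  "rkc_dtilde p s eps dt A r k =
     (\<Sum>j = 1..k. (rkc_b p s eps k / rkc_b p s eps j * rkc_mu p s eps j)
        *\<^sub>R (cheb_U_mat (k - j) (rkc_M p s eps dt A) *v r j))"

end

theory Submission
  imports Defs "HOL-Computational_Algebra.Polynomial"
begin


fun Qp :: "nat \<Rightarrow> real poly" where
  "Qp 0 = 1"
| "Qp (Suc 0) = [:1,1:]"
| "Qp (Suc (Suc j)) = smult 2 ([:1,1:] * Qp (Suc j)) - Qp j"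

lemma poly_Qp: "poly (Qp j) d = cheb_T j (1 + d)"
  by (induction j rule: Qp.induct) (auto simp: algebra_simps)

lemma smult2: "smult 2 (p::real poly) = 2 * p"
  by (metis mult_2 one_add_one smult_1_left smult_add_left)

lemma E1_alg:
  fixes x e T0 T1 T2 T3 D1 D2 D3 a :: "'a::idom"
  assumes "e = x*x - 1" "T3 = 2*(x*T2) - T1" "T0 = 2*(x*T1) - T2"
    "D3 = 2*T2 + 2*(x*D2) - D1" "e*D1 = a*(x*T1 - T0)" "e*D2 = (a+1)*(x*T2 - T1)"
  shows "e*D3 = (a+2)*(x*T3 - T2)"
  using assms by algebra

lemma E1: "[:0,2,1:] * pderiv (Qp (Suc n)) = of_nat (Suc n) * ([:1,1:] * Qp (Suc n) - Qp n)
   \<and> [:0,2,1:] * pderiv (Qp (Suc (Suc n))) = of_nat (Suc (Suc n)) * ([:1,1:] * Qp (Suc (Suc n)) - Qp (Suc n))"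
proof (induction n)
  case 0
  have q2: "Qp 2 = [:1,4,2:]" by (simp add: numeral_2_eq_2 one_pCons)
  show ?case by (simp add: q2 pderiv_pCons one_pCons)
next
  case (Suc n)
  let ?x = "[:1,1:] :: real poly"
  let ?e = "[:0,2,1:] :: real poly"
  have e: "?e = ?x * ?x - 1" by (simp add: one_pCons)
  have px: "pderiv ?x = 1" by (simp add: pderiv_pCons)
  have D: "pderiv (Qp (Suc (Suc (Suc n)))) = smult 2 (Qp (Suc (Suc n))) + smult 2 (?x * pderiv (Qp (Suc (Suc n)))) - pderiv (Qp (Suc n))"
    apply (subst Qp.simps(3))
    apply (simp only: pderiv_diff pderiv_smult pderiv_mult px)
    by (simp del: Qp.simps add: algebra_simps smult_add_right)
  have T: "Qp (Suc (Suc (Suc n))) = smult 2 (?x * Qp (Suc (Suc n))) - Qp (Suc n)" by simp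
  have T2: "Qp n = smult 2 (?x * Qp (Suc n)) - Qp (Suc (Suc n))" by simp
  from Suc have I1: "?e * pderiv (Qp (Suc n)) = of_nat (Suc n) * (?x * Qp (Suc n) - Qp n)"
    and I2: "?e * pderiv (Qp (Suc (Suc n))) = of_nat (Suc (Suc n)) * (?x * Qp (Suc (Suc n)) - Qp (Suc n))" by auto
  have "?e * pderiv (Qp (Suc (Suc (Suc n)))) = of_nat (Suc (Suc (Suc n))) * (?x * Qp (Suc (Suc (Suc n))) - Qp (Suc (Suc n)))"
  proof -
    have I2': "?e * pderiv (Qp (Suc (Suc n))) = (of_nat (Suc n) + 1) * (?x * Qp (Suc (Suc n)) - Qp (Suc n))"
      using I2 by simp
    have "?e * pderiv (Qp (Suc (Suc (Suc n)))) = (of_nat (Suc n) + 2) * (?x * Qp (Suc (Suc (Suc n))) - Qp (Suc (Suc n)))"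
      apply (rule E1_alg[OF e _ _ _ I1 I2'])
      using T T2 D by (simp_all del: Qp.simps add: smult2)
    then show ?thesis by (simp del: Qp.simps add: algebra_simps)
  qed
  with Suc show ?case by simp
qed

lemma E2_alg:
  fixes x e T0 T1 T2 D0 D1 D2 F0 F1 F2 a :: "'a::idom"
  assumes "T2 = 2*(x*T1) - T0" "D2 = 2*T1 + 2*(x*D1) - D0" "F2 = 4*D1 + 2*(x*F1) - F0"
    "e*F1 + x*D1 - (a+1)^2*T1 = 0" "e*F0 + x*D0 - a^2*T0 = 0" "e*D1 = (a+1)*(x*T1 - T0)"
  shows "e*F2 + x*D2 - (a+2)^2*T2 = 0"
  using assms by algebra

lemma pderiv_Qp: "pderiv (Qp (Suc (Suc n))) = 2 * Qp (Suc n) + 2 * ([:1,1:] * pderiv (Qp (Suc n))) - pderiv (Qp n)"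
  apply (subst Qp.simps(3))
  apply (simp only: pderiv_diff pderiv_smult pderiv_mult)
  by (simp del: Qp.simps add: algebra_simps smult_add_right smult2 pderiv_pCons)

lemma E2: "[:0,2,1:] * pderiv (pderiv (Qp n)) + [:1,1:] * pderiv (Qp n) - (of_nat n)^2 * Qp n = 0
   \<and> [:0,2,1:] * pderiv (pderiv (Qp (Suc n))) + [:1,1:] * pderiv (Qp (Suc n)) - (of_nat (Suc n))^2 * Qp (Suc n) = 0"
proof (induction n)
  case 0
  show ?case by (simp add: pderiv_pCons)
next
  case (Suc n)
  let ?x = "[:1,1:] :: real poly"
  let ?e = "[:0,2,1:] :: real poly"
  have F: "pderiv (pderiv (Qp (Suc (Suc n)))) = 4 * pderiv (Qp (Suc n)) + 2 * (?x * pderiv (pderiv (Qp (Suc n)))) - pderiv (pderiv (Qp n))"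
    unfolding pderiv_Qp
    by (simp del: Qp.simps add: pderiv_diff pderiv_add pderiv_mult algebra_simps pderiv_pCons)
  have T: "Qp (Suc (Suc n)) = 2 * (?x * Qp (Suc n)) - Qp n" by (simp add: smult2)
  have I1: "?e * pderiv (pderiv (Qp (Suc n))) + ?x * pderiv (Qp (Suc n)) - (of_nat n + 1)^2 * Qp (Suc n) = 0"
    using Suc by simp
  have I0: "?e * pderiv (pderiv (Qp n)) + ?x * pderiv (Qp n) - (of_nat n)^2 * Qp n = 0"
    using Suc by simp
  have e1: "?e * pderiv (Qp (Suc n)) = (of_nat n + 1) * (?x * Qp (Suc n) - Qp n)"
    using E1[of n] by simp
  have "?e * pderiv (pderiv (Qp (Suc (Suc n)))) + ?x * pderiv (Qp (Suc (Suc n))) - (of_nat n + 2)^2 * Qp (Suc (Suc n)) = 0"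
    by (rule E2_alg[OF T pderiv_Qp F I1 I0 e1])
  then have "?e * pderiv (pderiv (Qp (Suc (Suc n)))) + ?x * pderiv (Qp (Suc (Suc n))) - (of_nat (Suc (Suc n)))^2 * Qp (Suc (Suc n)) = 0"
    by (simp del: Qp.simps add: algebra_simps)
  with Suc show ?case by simp
qed


lemma cheb_T_1': "cheb_T j 1 = 1 \<and> cheb_T (Suc j) 1 = 1"
  by (induction j) auto

lemma cheb_T_1: "cheb_T j 1 = 1"
  using cheb_T_1' by blast

lemma q0: "coeff (Qp s) 0 = 1"
  using poly_Qp[of s 0] cheb_T_1[of s] by (simp add: poly_0_coeff_0)

lemma Qrec: "real (Suc k) * (2 * real k + 1) * coeff (Qp s) (Suc k) = ((real s)^2 - (real k)^2) * coeff (Qp s) k"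
proof -
  have E: "[:0,2,1:] * pderiv (pderiv (Qp s)) + [:1,1:] * pderiv (Qp s) - (of_nat s)^2 * Qp s = 0"
    using E2[of s] by simp
  have ofn: "(of_nat s :: real poly)^2 * Qp s = smult ((real s)^2) (Qp s)"
    by (simp add: of_nat_poly power2_eq_square)
  have C: "coeff ([:0,2,1:] * pderiv (pderiv (Qp s)) + [:1,1:] * pderiv (Qp s)) k - (real s)^2 * coeff (Qp s) k = 0"
    using arg_cong[OF E, of "\<lambda>p. coeff p k"] unfolding ofn by simp
  show ?thesis
  proof (cases k)
    case 0
    then show ?thesis using C by (simp add: coeff_pderiv)
  next
    case (Suc j)
    then show ?thesis using C
      apply (cases j)
      apply (simp_all add: coeff_pderiv algebra_simps)
      apply (simp_all add: power2_eq_square algebra_simps)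
      done
  qed
qed


lemma ineq1:
  fixes s j A B C :: real
  assumes A: "A \<ge> 0" and j: "j \<ge> 0" and s: "s \<ge> 0"
    and r1: "(j+1)*(2*j+1)*B = (s^2-j^2)*A" and r2: "(j+2)*(2*j+3)*C = (s^2-(j+1)^2)*B"
    and js: "j \<le> s \<or> A = 0"
  shows "2*(j+2)*C + 2*(j+1)*B - 2 * s^2*B + 4/3 * s^4*A \<ge> 0"
proof -
  let ?X = "2*(j+2)*C + 2*(j+1)*B - 2 * s^2*B + 4/3 * s^4*A"
  let ?R1 = "4/3*(2*j+3) * s^4*A - (2*j+2)*(2 * s^2-j-2)*B"
  have d1: "(2*j+3)*?X - ?R1 = 2*((j+2)*(2*j+3)*C - (s^2-(j+1)^2)*B)"
    by (simp add: algebra_simps power2_eq_square)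
  have e1: "(2*j+3)*?X = ?R1" using d1 r2 by simp
  let ?br = "4/3*(2*j+1)*(2*j+3) * s^4 - 2*(2 * s^2-j-2)*(s^2-j^2)"
  have d2: "(2*j+1)*?R1 - A * ?br = - 2*(2 * s^2-j-2)*((j+1)*(2*j+1)*B - (s^2-j^2)*A)"
    by (simp add: algebra_simps power2_eq_square)
  have e2: "(2*j+1)*((2*j+3)*?X) = A * ?br" unfolding e1 using d2 r1 by simp
  have br: "?br \<ge> 0" if "j \<le> s"
  proof -
    have h1: "0 \<le> s^2 - j^2" "s^2 - j^2 \<le> s^2" using that j s by (auto simp: power_mono)
    have "(2 * s^2-j-2)*(s^2-j^2) \<le> (2 * s^2)*(s^2)"
    proof (cases "2 * s^2-j-2 \<ge> 0")
      case True
      then show ?thesis using h1 j by (intro mult_mono) auto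
    next
      case False
      then have "(2 * s^2-j-2)*(s^2-j^2) \<le> 0" using h1 by (simp add: mult_nonpos_nonneg)
      moreover have "0 \<le> (2 * s^2)*(s^2)" by simp
      ultimately show ?thesis by linarith
    qed
    moreover have "4/3*(2*j+1)*(2*j+3) * s^4 \<ge> 4 * s^4"
    proof -
      have "(2*j+1)*(2*j+3) \<ge> 3" using j by (simp add: algebra_simps)
      moreover have "s^4 \<ge> 0" by simp
      ultimately have "((2*j+1)*(2*j+3)) * s^4 \<ge> 3 * s^4" by (intro mult_right_mono) auto
      then show ?thesis by (simp add: algebra_simps)
    qed
    moreover have "(2 * s^2)*(s^2) = 2 * s^4" by (simp add: power2_eq_square power4_eq_xxxx)
    ultimately show ?thesis by linarith
  qed
  have "A * ?br \<ge> 0"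
    using js br A by auto
  then have "(2*j+1)*((2*j+3)*?X) \<ge> 0" using e2 by simp
  moreover have "(2*j+1) > 0" "(2*j+3) > 0" using j by auto
  ultimately show ?thesis by (simp add: zero_le_mult_iff)
qed

lemma ineq2:
  fixes s k A B C :: real
  assumes A: "A \<ge> 0" and k: "k \<ge> 1" and s: "s \<ge> 1" and kk: "k = 1 \<or> k \<ge> 2"
    and r1: "(k+1)*(2*k+1)*B = (s^2-k^2)*A" and r2: "(k+2)*(2*k+3)*C = (s^2-(k+1)^2)*B"
    and ks: "k \<le> s \<or> A = 0"
  shows "2*(k+1)*(k+2)*C + 2*k*(k+1)*B - 2/3*(s^2-1)*(k+1)*B + 4/45 * s^2*(s^2-1)*k*A \<ge> 0"
proof -
  let ?Y = "2*(k+1)*(k+2)*C + 2*k*(k+1)*B - 2/3*(s^2-1)*(k+1)*B + 4/45 * s^2*(s^2-1)*k*A"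
  let ?G = "2*(s^2-(k+1)^2) + (2*k+3)*(2*k - 2/3*(s^2-1))"
  let ?R1 = "(k+1)*B*?G + (2*k+3)*(4/45)* s^2*(s^2-1)*k*A"
  have d1: "(2*k+3)*?Y - ?R1 = 2*(k+1)*((k+2)*(2*k+3)*C - (s^2-(k+1)^2)*B)"
    by algebra
  have e1: "(2*k+3)*?Y = ?R1" using d1 r2 by simp
  let ?br = "(s^2-k^2)*?G + (2*k+1)*(2*k+3)*(4/45)* s^2*(s^2-1)*k"
  have d2: "(2*k+1)*?R1 - A * ?br = ?G*((k+1)*(2*k+1)*B - (s^2-k^2)*A)"
    by algebra
  have e2: "(2*k+1)*((2*k+3)*?Y) = A * ?br" unfolding e1 using d2 r1 by simp
  have br: "?br \<ge> 0" if "k \<le> s"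
  proof (cases "k = 1")
    case True
    have eq: "?br = (s^2-1)*16/3" using True by algebra
    have "s^2 \<ge> 1" using s by (simp add: one_le_power)
    then show ?thesis unfolding eq by simp
  next
    case False
    then have k2: "k \<ge> 2" using kk by auto
    let ?P = "s^2-k^2"
    let ?Gm = "?G + 2/3*(2*k+3)*(s^2-1)"
    let ?W = "(2*k+3)* s^2*(s^2-1)"
    have h1: "0 \<le> ?P" "?P \<le> s^2" using that k by (auto simp: power_mono)
    have s1: "s^2 - 1 \<ge> 0" using s by (simp add: one_le_power)
    have Gm: "?Gm \<ge> 0"
    proof -
      have eqGm: "?Gm = 2 * s^2 + 2*k^2 + 2*k - 2" by algebra
      have "k^2 \<ge> 1" using k by (simp add: one_le_power)
      moreover have "s^2 \<ge> 0" by simp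
      ultimately show ?thesis unfolding eqGm using k by linarith
    qed
    have t1: "?P * ?Gm \<ge> 0" using h1 Gm by simp
    have t2: "?P * ((2*k+3)*(s^2-1)) \<le> s^2 * ((2*k+3)*(s^2-1))"
      using h1 s1 k by (intro mult_right_mono) auto
    have W0: "?W \<ge> 0" using s1 k by simp
    have kk2: "4/45*(k*(2*k+1)) \<ge> 2/3"
    proof -
      have "k*(2*k+1) \<ge> 2*(2*2+1)" using k2 by (intro mult_mono) auto
      then show ?thesis by simp
    qed
    have t3: "4/45*(k*(2*k+1)) * ?W \<ge> 2/3 * ?W" using kk2 W0 by (intro mult_right_mono) auto
    have eqbr: "?br = ?P * ?Gm - 2/3 * (?P * ((2*k+3)*(s^2-1))) + 4/45*(k*(2*k+1)) * ?W"
      by algebra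
    have eqW: "s^2 * ((2*k+3)*(s^2-1)) = ?W" by algebra
    show ?thesis unfolding eqbr using t1 t2 t3 eqW by linarith
  qed
  have "A * ?br \<ge> 0"
    using ks br A by auto
  then have "(2*k+1)*((2*k+3)*?Y) \<ge> 0" using e2 by simp
  moreover have "(2*k+1) > 0" "(2*k+3) > 0" using k by auto
  ultimately show ?thesis by (simp add: zero_le_mult_iff)
qed

lemma qprops: "coeff (Qp s) k \<ge> 0 \<and> (s < k \<longrightarrow> coeff (Qp s) k = 0)"
proof (induction k)
  case 0
  then show ?case by (simp add: q0)
next
  case (Suc k)
  have r: "real (Suc k) * (2 * real k + 1) * coeff (Qp s) (Suc k) = ((real s)^2 - (real k)^2) * coeff (Qp s) k"
    by (rule Qrec)
  have pos: "real (Suc k) * (2 * real k + 1) > 0" by simp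
  show ?case
  proof (cases "k < s")
    case True
    then have "(real s)^2 - (real k)^2 \<ge> 0" by (simp add: power_mono)
    then have "((real s)^2 - (real k)^2) * coeff (Qp s) k \<ge> 0" using Suc by simp
    then have "coeff (Qp s) (Suc k) \<ge> 0" using r pos by (metis zero_le_mult_iff not_less)
    then show ?thesis using True by simp
  next
    case False
    then have "((real s)^2 - (real k)^2) * coeff (Qp s) k = 0"
      using Suc by (cases "k = s") auto
    then have "real (Suc k) * (2 * real k + 1) * coeff (Qp s) (Suc k) = 0" using r by simp
    then have "coeff (Qp s) (Suc k) = 0" using pos by simp
    then show ?thesis by simp
  qed
qed

lemma poly_nonneg_coeffs:
  fixes p :: "real poly"
  assumes "\<And>k. coeff p k \<ge> 0" "d \<ge> 0"
  shows "poly p d \<ge> coeff p 0"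
proof -
  have "poly p d = (\<Sum>i\<le>degree p. coeff p i * d ^ i)" by (rule poly_altdef)
  moreover have "coeff p 0 * d ^ 0 \<le> (\<Sum>i\<le>degree p. coeff p i * d ^ i)"
    by (rule member_le_sum) (use assms in auto)
  ultimately show ?thesis by simp
qed

definition Fp :: "nat \<Rightarrow> real poly" where
  "Fp s = smult 2 ([:1,1:] * pderiv (Qp s)) - smult (2 * (real s)^2) (Qp s) + smult (4/3 * (real s)^4) ([:0,1:] * Qp s)"

lemma Fp_coeff: "coeff (Fp s) k \<ge> 0"
proof (cases k)
  case 0
  have "real (Suc 0) * (2 * real 0 + 1) * coeff (Qp s) (Suc 0) = ((real s)^2 - (real 0)^2) * coeff (Qp s) 0"
    by (rule Qrec)
  then show ?thesis using 0 by (simp add: Fp_def coeff_pderiv q0)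
next
  case (Suc j)
  have r1: "(real j+1)*(2*real j+1)*coeff (Qp s) (Suc j) = ((real s)^2-(real j)^2)*coeff (Qp s) j"
    using Qrec[of j s] by (simp add: algebra_simps)
  have r2: "(real j+2)*(2*real j+3)*coeff (Qp s) (Suc (Suc j)) = ((real s)^2-(real j+1)^2)*coeff (Qp s) (Suc j)"
    using Qrec[of "Suc j" s] by (simp add: algebra_simps)
  have js: "real j \<le> real s \<or> coeff (Qp s) j = 0" using qprops[of s j] by auto
  have "2*(real j+2)*coeff (Qp s) (Suc (Suc j)) + 2*(real j+1)*coeff (Qp s) (Suc j) - 2 * (real s)^2*coeff (Qp s) (Suc j) + 4/3 * (real s)^4*coeff (Qp s) j \<ge> 0"
    by (rule ineq1[OF _ _ _ r1 r2 js]) (use qprops in auto)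
  then show ?thesis using Suc by (simp add: Fp_def coeff_pderiv algebra_simps)
qed

definition Hp :: "nat \<Rightarrow> real poly" where
  "Hp s = smult 2 ([:1,1:] * pderiv (pderiv (Qp s))) - smult (2/3 * ((real s)^2 - 1)) (pderiv (Qp s))
     + smult (4/45 * (real s)^2 * ((real s)^2 - 1)) ([:0,1:] * pderiv (Qp s))"

lemma Hp_coeff: assumes "s \<ge> 1" shows "coeff (Hp s) k \<ge> 0"
proof (cases k)
  case 0
  have "real (Suc 1) * (2 * real 1 + 1) * coeff (Qp s) (Suc 1) = ((real s)^2 - (real 1)^2) * coeff (Qp s) 1"
    by (rule Qrec)
  then show ?thesis using 0 by (simp add: Hp_def coeff_pderiv algebra_simps numeral_2_eq_2)
next
  case (Suc j)
  have r1: "(real j+1+1)*(2*(real j+1)+1)*coeff (Qp s) (Suc (Suc j)) = ((real s)^2-(real j+1)^2)*coeff (Qp s) (Suc j)"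
    using Qrec[of "Suc j" s] by (simp add: algebra_simps)
  have r2: "(real j+1+2)*(2*(real j+1)+3)*coeff (Qp s) (Suc (Suc (Suc j))) = ((real s)^2-(real j+1+1)^2)*coeff (Qp s) (Suc (Suc j))"
    using Qrec[of "Suc (Suc j)" s] by (simp add: algebra_simps)
  have js: "real j + 1 \<le> real s \<or> coeff (Qp s) (Suc j) = 0" using qprops[of s "Suc j"] by auto
  have kk: "real j + 1 = 1 \<or> real j + 1 \<ge> 2" by auto
  have "2*(real j+1+1)*(real j+1+2)*coeff (Qp s) (Suc (Suc (Suc j))) + 2*(real j+1)*(real j+1+1)*coeff (Qp s) (Suc (Suc j))
     - 2/3*((real s)^2-1)*(real j+1+1)*coeff (Qp s) (Suc (Suc j)) + 4/45 * (real s)^2*((real s)^2-1)*(real j+1)*coeff (Qp s) (Suc j) \<ge> 0"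
    by (rule ineq2[OF _ _ _ kk r1 r2 js]) (use qprops assms in auto)
  moreover have "coeff (Hp s) (Suc j) = 2*(real j+1+1)*(real j+1+2)*coeff (Qp s) (Suc (Suc (Suc j))) + 2*(real j+1)*(real j+1+1)*coeff (Qp s) (Suc (Suc j))
     - 2/3*((real s)^2-1)*(real j+1+1)*coeff (Qp s) (Suc (Suc j)) + 4/45 * (real s)^2*((real s)^2-1)*(real j+1)*coeff (Qp s) (Suc j)"
    apply (simp add: Hp_def coeff_pderiv)
    by algebra
  ultimately show ?thesis using Suc by simp
qed


lemma sym_inner:
  fixes A :: "real^'n^'n"
  assumes "transpose A = A"
  shows "(A *v x) \<bullet> y = x \<bullet> (A *v y)"
proof -
  have "A *v x = x v* A" using vector_transpose_matrix[of x A] assms by simp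
  then show ?thesis by (simp add: dot_lmul_matrix)
qed

lemma eig_exists:
  fixes A :: "real^'n^'n"
  assumes sym: "transpose A = A" and S: "subspace S" and S0: "S \<noteq> {0}"
    and inv: "\<forall>x\<in>S. A *v x \<in> S"
  shows "\<exists>u\<in>S. norm u = 1 \<and> (\<exists>l. A *v u = l *\<^sub>R u)"
proof -
  define K where "K = S \<inter> sphere 0 1"
  have cK: "compact K" unfolding K_def
    using closed_Int_compact[OF closed_subspace[OF S] compact_sphere[of 0 1]] by simp
  obtain x where x: "x \<in> S" "x \<noteq> 0" using S0 S subspace_0 by blast
  have "(1 / norm x) *\<^sub>R x \<in> K" unfolding K_def using x S by (simp add: subspace_scale)
  then have nK: "K \<noteq> {}" by blast
  define f where "f = (\<lambda>x::real^'n. x \<bullet> (A *v x))"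
  have cf: "continuous_on K f" unfolding f_def
    by (intro continuous_intros linear_continuous_on matrix_vector_mul_linear[THEN linear_conv_bounded_linear[THEN iffD1]])
  obtain u where u: "u \<in> K" and umin: "\<forall>y\<in>K. f u \<le> f y"
    using continuous_attains_inf[OF cK nK cf] by blast
  define l where "l = f u"
  have uS: "u \<in> S" and nu: "norm u = 1" using u by (auto simp: K_def)
  have uu: "u \<bullet> u = 1" using nu by (simp add: norm_eq_1)
  have quad: "l * (y \<bullet> y) \<le> f y" if yS: "y \<in> S" for y
  proof (cases "y = 0")
    case True
    then show ?thesis by (simp add: f_def)
  next
    case False
    let ?z = "(1 / norm y) *\<^sub>R y"
    have "?z \<in> K" unfolding K_def using yS False S by (simp add: subspace_scale)
    then have "l \<le> f ?z" using umin l_def by blast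
    also have "f ?z = f y / (norm y)^2"
      by (simp add: f_def matrix_vector_mult_scaleR power2_eq_square)
    finally have "l * (norm y)^2 \<le> f y" using False by (simp add: field_simps)
    then show ?thesis by (simp add: power2_norm_eq_inner)
  qed
  define w where "w = A *v u - l *\<^sub>R u"
  have wS: "w \<in> S" unfolding w_def using inv uS S by (simp add: subspace_diff subspace_scale)
  define g where "g = (\<lambda>y. f y - l * (y \<bullet> y))"
  have gnn: "g y \<ge> 0" if "y \<in> S" for y using quad[OF that] by (simp add: g_def)
  have gu: "g u = 0" by (simp add: g_def l_def uu)
  have exp: "g (u + t *\<^sub>R w) = 2 * t * (w \<bullet> w) + t^2 * g w" for t
  proof -
    have s1: "u \<bullet> (A *v w) = (A *v u) \<bullet> w" using sym_inner[OF sym, of u w] by simp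
    have s2: "(A *v u) \<bullet> w - l * (u \<bullet> w) = w \<bullet> w"
      unfolding w_def by (simp add: inner_diff_left inner_diff_right inner_commute algebra_simps)
    have "g (u + t *\<^sub>R w) = g u + t * ((A *v u) \<bullet> w - l * (u \<bullet> w)) + t * (w \<bullet> (A *v u) - l * (w \<bullet> u)) + t^2 * g w"
      unfolding g_def f_def using s1
      by (simp add: algebra_simps inner_add_left inner_add_right matrix_vector_right_distrib matrix_vector_mult_scaleR power2_eq_square)
    also have "\<dots> = 2 * t * (w \<bullet> w) + t^2 * g w"
      using s2 gu by (simp add: inner_commute algebra_simps)
    finally show ?thesis .
  qed
  have "w \<bullet> w = 0"
  proof (rule ccontr)
    assume ne: "w \<bullet> w \<noteq> 0"
    define N where "N = w \<bullet> w"
    have Npos: "N > 0" using ne by (simp add: N_def)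
    define G where "G = g w"
    define t where "t = - N / (\<bar>G\<bar> + 1)"
    have "u + t *\<^sub>R w \<in> S" using uS wS S by (simp add: subspace_add subspace_scale)
    then have "0 \<le> g (u + t *\<^sub>R w)" using gnn by blast
    then have "0 \<le> 2 * t * N + t^2 * G" unfolding exp N_def G_def .
    moreover have "2 * t * N + t^2 * G < 0"
    proof -
      have d: "\<bar>G\<bar> + 1 > 0" by simp
      have "t^2 * G \<le> t^2 * (\<bar>G\<bar> + 1)" by (intro mult_left_mono) auto
      also have "\<dots> = N * N / (\<bar>G\<bar> + 1)"
      proof -
        define D where "D = \<bar>G\<bar> + 1"
        have "D > 0" using d by (simp add: D_def)
        then have "(- N / D)^2 * D = N * N / D" by (simp add: power2_eq_square field_simps)
        then show ?thesis unfolding t_def D_def .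
      qed
      finally have "2 * t * N + t^2 * G \<le> 2 * t * N + N * N / (\<bar>G\<bar> + 1)" by simp
      also have "\<dots> = - (N * N / (\<bar>G\<bar> + 1))"
      proof -
        define D where "D = \<bar>G\<bar> + 1"
        have "D > 0" using d by (simp add: D_def)
        then have "2 * (- N / D) * N + N * N / D = - (N * N / D)" by (simp add: field_simps)
        then show ?thesis unfolding t_def D_def .
      qed
      also have "\<dots> < 0" using Npos d by simp
      finally show ?thesis .
    qed
    ultimately show False by simp
  qed
  then have "w = 0" by simp
  then have "A *v u = l *\<^sub>R u" by (simp add: w_def)
  then show ?thesis using uS nu by blast
qed

definition eigbasis :: "real^'n^'n \<Rightarrow> (real^'n) set \<Rightarrow> (real^'n) set \<Rightarrow> bool" where
  "eigbasis A S B \<longleftrightarrow> finite B \<and> B \<subseteq> S \<and> (\<forall>b\<in>B. norm b = 1 \<and> (\<exists>l. A *v b = l *\<^sub>R b))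
     \<and> pairwise orthogonal B \<and> (\<forall>x\<in>S. x = (\<Sum>b\<in>B. (b \<bullet> x) *\<^sub>R b))"

lemma eig_basis_aux:
  fixes A :: "real^'n^'n"
  assumes sym: "transpose A = A"
  shows "\<forall>S. subspace S \<and> dim S = d \<and> (\<forall>x\<in>S. A *v x \<in> S) \<longrightarrow> (\<exists>B. eigbasis A S B)"
proof (induction d rule: less_induct)
  case (less d)
  show ?case
  proof (intro allI impI)
    fix S :: "(real^'n) set"
    assume H: "subspace S \<and> dim S = d \<and> (\<forall>x\<in>S. A *v x \<in> S)"
    then have S: "subspace S" and dS: "dim S = d" and inv: "\<forall>x\<in>S. A *v x \<in> S" by auto
    show "\<exists>B. eigbasis A S B"
    proof (cases "S = {0}")
      case True
      then show ?thesis by (intro exI[of _ "{}"]) (simp add: eigbasis_def)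
    next
      case False
      obtain u l where uS: "u \<in> S" and nu: "norm u = 1" and ul: "A *v u = l *\<^sub>R u"
        using eig_exists[OF sym S False inv] by blast
      have uu: "u \<bullet> u = 1" using nu by (simp add: norm_eq_1)
      define S' where "S' = S \<inter> {y. orthogonal u y}"
      have S'sub: "subspace S'" unfolding S'_def by (intro subspace_inter S subspace_orthogonal_to_vector)
      have inv': "\<forall>x\<in>S'. A *v x \<in> S'"
      proof
        fix x assume x: "x \<in> S'"
        have "u \<bullet> (A *v x) = (A *v u) \<bullet> x" using sym_inner[OF sym] by simp
        also have "\<dots> = l * (u \<bullet> x)" using ul by simp
        also have "\<dots> = 0" using x by (simp add: S'_def orthogonal_def)
        finally show "A *v x \<in> S'" using x inv by (simp add: S'_def orthogonal_def)
      qed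
      have "u \<notin> S'" using uu by (simp add: S'_def orthogonal_def)
      then have pss: "S' \<subset> S" using uS by (auto simp: S'_def)
      have e1: "span S' = S'" using S'sub span_eq_iff by blast
      have e2: "span S = S" using S span_eq_iff by blast
      have "span S' \<subset> span S" unfolding e1 e2 by (rule pss)
      then have "dim S' < d" using dS dim_psubset by blast
      then obtain B' where B': "eigbasis A S' B'" using less S'sub inv' by blast
      have uB': "u \<notin> B'" using B' uu by (auto simp: eigbasis_def S'_def orthogonal_def)
      have orthB': "\<forall>b\<in>B'. u \<bullet> b = 0" using B' by (auto simp: eigbasis_def S'_def orthogonal_def)
      have "eigbasis A S (insert u B')"
        unfolding eigbasis_def
      proof (intro conjI)
        show "finite (insert u B')" using B' by (simp add: eigbasis_def)
        show "insert u B' \<subseteq> S" using B' uS by (auto simp: eigbasis_def S'_def)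
        show "\<forall>b\<in>insert u B'. norm b = 1 \<and> (\<exists>l. A *v b = l *\<^sub>R b)" using B' nu ul by (auto simp: eigbasis_def)
        show "pairwise orthogonal (insert u B')"
          using B' orthB' by (auto simp: eigbasis_def pairwise_insert orthogonal_def inner_commute)
        show "\<forall>x\<in>S. x = (\<Sum>b\<in>insert u B'. (b \<bullet> x) *\<^sub>R b)"
        proof
          fix x assume xS: "x \<in> S"
          define x' where "x' = x - (u \<bullet> x) *\<^sub>R u"
          have "x' \<in> S'" unfolding S'_def x'_def orthogonal_def using xS uS S uu
            by (simp add: subspace_diff subspace_scale inner_diff_right)
          then have ex: "x' = (\<Sum>b\<in>B'. (b \<bullet> x') *\<^sub>R b)" using B' by (simp add: eigbasis_def)
          have "\<forall>b\<in>B'. b \<bullet> x' = b \<bullet> x" using orthB' unfolding x'_def by (simp add: inner_diff_right inner_commute)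
          then have "(\<Sum>b\<in>B'. (b \<bullet> x') *\<^sub>R b) = (\<Sum>b\<in>B'. (b \<bullet> x) *\<^sub>R b)" by simp
          then have "x = (u \<bullet> x) *\<^sub>R u + (\<Sum>b\<in>B'. (b \<bullet> x) *\<^sub>R b)" using ex unfolding x'_def by (simp add: algebra_simps)
          then show "x = (\<Sum>b\<in>insert u B'. (b \<bullet> x) *\<^sub>R b)" using B' uB' by (simp add: eigbasis_def)
        qed
      qed
      then show ?thesis by blast
    qed
  qed
qed

lemma eig_basis:
  fixes A :: "real^'n^'n"
  assumes sym: "transpose A = A"
  shows "\<exists>B. eigbasis A UNIV B"
  using eig_basis_aux[OF sym] by auto


lemma norm_sq_orth:
  fixes B :: "(real^'n) set"
  assumes "finite B" "pairwise orthogonal B" "\<forall>b\<in>B. norm b = 1"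
  shows "(norm (\<Sum>b\<in>B. c b *\<^sub>R b))^2 = (\<Sum>b\<in>B. (c b)^2)"
proof -
  have "pairwise (\<lambda>i j. orthogonal (c i *\<^sub>R i) (c j *\<^sub>R j)) B"
    using assms(2) unfolding pairwise_def by (auto intro: orthogonal_clauses)
  then have "(norm (\<Sum>b\<in>B. c b *\<^sub>R b))^2 = (\<Sum>b\<in>B. (norm (c b *\<^sub>R b))^2)"
    using norm_sum_Pythagorean[OF assms(1), of "\<lambda>b. c b *\<^sub>R b"] by simp
  also have "\<dots> = (\<Sum>b\<in>B. (c b)^2)" using assms(3) by (intro sum.cong) (auto simp: power2_eq_square)
  finally show ?thesis .
qed

lemma spectral_bound:
  fixes A P :: "real^'n^'n"
  assumes sym: "transpose A = A" and K: "K \<ge> 0"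
    and H: "\<And>b l. norm b = 1 \<Longrightarrow> A *v b = l *\<^sub>R b \<Longrightarrow> \<exists>c. P *v b = c *\<^sub>R b \<and> \<bar>c\<bar> \<le> K"
  shows "norm (P *v v) \<le> K * norm v"
proof -
  obtain B where B: "eigbasis A UNIV B" using eig_basis[OF sym] by blast
  have fB: "finite B" and oB: "pairwise orthogonal B" and nB: "\<forall>b\<in>B. norm b = 1"
    and eB: "\<forall>b\<in>B. \<exists>l. A *v b = l *\<^sub>R b" and xB: "\<And>x. x = (\<Sum>b\<in>B. (b \<bullet> x) *\<^sub>R b)"
    using B by (auto simp: eigbasis_def)
  have "\<forall>b\<in>B. \<exists>c. P *v b = c *\<^sub>R b \<and> \<bar>c\<bar> \<le> K" using H nB eB by blast
  then obtain c where c: "\<And>b. b \<in> B \<Longrightarrow> P *v b = c b *\<^sub>R b \<and> \<bar>c b\<bar> \<le> K" by metis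
  have "P *v v = P *v (\<Sum>b\<in>B. (b \<bullet> v) *\<^sub>R b)" using xB[of v] by simp
  also have "\<dots> = (\<Sum>b\<in>B. P *v ((b \<bullet> v) *\<^sub>R b))"
    by (rule linear_sum[OF matrix_vector_mul_linear])
  also have "\<dots> = (\<Sum>b\<in>B. ((b \<bullet> v) * c b) *\<^sub>R b)"
    using c by (intro sum.cong) (auto simp: matrix_vector_mult_scaleR)
  finally have Pv: "P *v v = (\<Sum>b\<in>B. ((b \<bullet> v) * c b) *\<^sub>R b)" .
  have "(norm (P *v v))^2 = (\<Sum>b\<in>B. ((b \<bullet> v) * c b)^2)"
    unfolding Pv by (rule norm_sq_orth[OF fB oB nB])
  also have "\<dots> \<le> (\<Sum>b\<in>B. K^2 * (b \<bullet> v)^2)"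
  proof (intro sum_mono)
    fix b assume "b \<in> B"
    then have "\<bar>c b\<bar> \<le> \<bar>K\<bar>" using c K by auto
    then have "(c b)^2 \<le> K^2" by (simp add: abs_le_square_iff)
    then show "((b \<bullet> v) * c b)^2 \<le> K^2 * (b \<bullet> v)^2"
      by (simp add: power_mult_distrib mult.commute mult_right_mono)
  qed
  also have "\<dots> = K^2 * (\<Sum>b\<in>B. (b \<bullet> v)^2)" by (simp add: sum_distrib_left)
  also have "(\<Sum>b\<in>B. (b \<bullet> v)^2) = (norm v)^2"
    using norm_sq_orth[OF fB oB nB, of "\<lambda>b. b \<bullet> v"] unfolding xB[of v, symmetric] by simp
  finally have "(norm (P *v v))^2 \<le> (K * norm v)^2" by (simp add: power_mult_distrib)
  moreover have "0 \<le> K * norm v" using K by simp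
  ultimately show ?thesis by (rule power2_le_imp_le)
qed


lemma cheb_U_mat_eig:
  fixes M :: "real^'n^'n"
  assumes "M *v b = mu *\<^sub>R b"
  shows "cheb_U_mat m M *v b = cheb_U m mu *\<^sub>R b \<and> cheb_U_mat (Suc m) M *v b = cheb_U (Suc m) mu *\<^sub>R b"
proof (induction m)
  case 0
  then show ?case using assms by (simp add: scaleR_matrix_vector_assoc[symmetric])
next
  case (Suc m)
  have "cheb_U_mat (Suc (Suc m)) M *v b = 2 *\<^sub>R (M *v (cheb_U_mat (Suc m) M *v b)) - cheb_U_mat m M *v b"
    by (simp add: matrix_vector_mult_diff_rdistrib scaleR_matrix_vector_assoc[symmetric] matrix_vector_mul_assoc)
  also have "\<dots> = cheb_U (Suc (Suc m)) mu *\<^sub>R b"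
    using Suc assms by (simp add: matrix_vector_mult_scaleR algebra_simps)
  finally show ?case using Suc by simp
qed

lemma spec_radius_ge:
  fixes A :: "real^'n^'n"
  assumes b: "b \<noteq> 0" and ev: "A *v b = l *\<^sub>R b"
  shows "\<bar>l\<bar> \<le> spec_radius A"
proof -
  define E where "E = {cmod z | z. \<exists>v :: complex^'n. v \<noteq> 0 \<and> complexify_mat A *v v = z *s v}"
  define v where "v = (\<chi> i. complex_of_real (b $ i))"
  have v0: "v \<noteq> 0" using b by (auto simp: v_def vec_eq_iff)
  have "complexify_mat A *v v = complex_of_real l *s v"
  proof -
    have "(complexify_mat A *v v) $ i = complex_of_real ((A *v b) $ i)" for i
      by (simp add: complexify_mat_def v_def matrix_vector_mult_def)
    then show ?thesis using ev by (simp add: vec_eq_iff v_def)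
  qed
  then have inE: "\<bar>l\<bar> \<in> E" unfolding E_def using v0 by force
  define Bd where "Bd = (\<Sum>i\<in>UNIV. \<Sum>j\<in>UNIV. \<bar>A $ i $ j\<bar>)"
  have bnd: "e \<le> Bd" if "e \<in> E" for e
  proof -
    obtain z w where e: "e = cmod z" and w0: "w \<noteq> 0" and ew: "complexify_mat A *v w = z *s w"
      using \<open>e \<in> E\<close> unfolding E_def by blast
    define m where "m = Max (range (\<lambda>j. cmod (w $ j)))"
    have "m \<in> range (\<lambda>j. cmod (w $ j))" unfolding m_def by (intro Max_in) auto
    then obtain i0 where i0: "cmod (w $ i0) = m" by auto
    have mge: "cmod (w $ j) \<le> m" for j unfolding m_def by (intro Max_ge) auto
    have mpos: "m > 0"
    proof (rule ccontr)
      assume "\<not> m > 0"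
      then have "\<forall>j. w $ j = 0" using mge by (metis norm_le_zero_iff order_trans not_less)
      then show False using w0 by (simp add: vec_eq_iff)
    qed
    have "z * w $ i0 = (\<Sum>j\<in>UNIV. complex_of_real (A $ i0 $ j) * w $ j)"
      using arg_cong[OF ew, of "\<lambda>x. x $ i0"] by (simp add: matrix_vector_mult_def complexify_mat_def)
    then have "cmod z * m = cmod (\<Sum>j\<in>UNIV. complex_of_real (A $ i0 $ j) * w $ j)"
      using i0 by (metis norm_mult)
    also have "\<dots> \<le> (\<Sum>j\<in>UNIV. \<bar>A $ i0 $ j\<bar> * cmod (w $ j))"
      by (rule order_trans[OF norm_sum]) (simp add: norm_mult)
    also have "\<dots> \<le> (\<Sum>j\<in>UNIV. \<bar>A $ i0 $ j\<bar> * m)"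
      by (intro sum_mono mult_left_mono mge) auto
    also have "\<dots> = (\<Sum>j\<in>UNIV. \<bar>A $ i0 $ j\<bar>) * m" by (simp add: sum_distrib_right)
    finally have "cmod z \<le> (\<Sum>j\<in>UNIV. \<bar>A $ i0 $ j\<bar>)" using mpos by simp
    also have "\<dots> \<le> Bd" unfolding Bd_def
      by (rule member_le_sum[of i0 UNIV "\<lambda>i. \<Sum>j\<in>UNIV. \<bar>A $ i $ j\<bar>"]) (auto intro: sum_nonneg)
    finally show ?thesis using e by simp
  qed
  have "bdd_above E" using bnd by (auto simp: bdd_above_def)
  then have "\<bar>l\<bar> \<le> Sup E" using inE by (simp add: cSup_upper)
  then show ?thesis by (simp add: spec_radius_def E_def)
qed


lemma cheb_U_1: "cheb_U m 1 = real m + 1 \<and> cheb_U (Suc m) 1 = real m + 2"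
  by (induction m) auto

lemma cheb_U_neg: "cheb_U m (-x) = (-1)^m * cheb_U m x \<and> cheb_U (Suc m) (-x) = (-1)^(Suc m) * cheb_U (Suc m) x"
  by (induction m) (auto simp: algebra_simps)

lemma cheb_U_sin: "cheb_U m (cos t) * sin t = sin ((real m + 1) * t) \<and> cheb_U (Suc m) (cos t) * sin t = sin ((real m + 2) * t)"
proof (induction m)
  case 0
  then show ?case by (simp add: sin_double)
next
  case (Suc m)
  have "sin ((real m + 3) * t) = 2 * cos t * sin ((real m + 2) * t) - sin ((real m + 1) * t)"
  proof -
    have a: "(real m + 3) * t = (real m + 2) * t + t" "(real m + 1) * t = (real m + 2) * t - t"
      by (simp_all add: algebra_simps)
    show ?thesis unfolding a sin_add sin_diff by (simp add: algebra_simps)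
  qed
  moreover have "cheb_U (Suc (Suc m)) (cos t) * sin t = 2 * cos t * (cheb_U (Suc m) (cos t) * sin t) - cheb_U m (cos t) * sin t"
    by (simp add: algebra_simps)
  ultimately show ?case using Suc by (simp add: algebra_simps)
qed

lemma sin_mult_bound: "\<bar>sin (real n * t)\<bar> \<le> real n * \<bar>sin t\<bar>"
proof (induction n)
  case 0
  then show ?case by simp
next
  case (Suc n)
  have a: "real (Suc n) * t = real n * t + t" by (simp add: algebra_simps)
  have "sin (real (Suc n) * t) = sin (real n * t) * cos t + cos (real n * t) * sin t"
    unfolding a sin_add ..
  then have "\<bar>sin (real (Suc n) * t)\<bar> \<le> \<bar>sin (real n * t)\<bar> * \<bar>cos t\<bar> + \<bar>cos (real n * t)\<bar> * \<bar>sin t\<bar>"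
    by (metis abs_mult abs_triangle_ineq)
  also have "\<dots> \<le> \<bar>sin (real n * t)\<bar> + \<bar>sin t\<bar>"
    by (intro add_mono) (auto intro: mult_left_le mult_left_le_one_le abs_cos_le_one simp: mult_le_cancel_left1)
  finally show ?case using Suc by (simp add: algebra_simps)
qed

lemma cheb_U_le_unit: assumes "\<bar>x\<bar> \<le> 1" shows "\<bar>cheb_U m x\<bar> \<le> real m + 1"
proof -
  define t where "t = arccos x"
  have xt: "cos t = x" using assms by (simp add: t_def cos_arccos_abs)
  show ?thesis
  proof (cases "sin t = 0")
    case True
    then have "x = 1 \<or> x = -1" using xt by (metis sin_cos_squared_add power2_eq_1_iff add_0 power_zero_numeral zero_neq_numeral) 
    then show ?thesis using cheb_U_1[of m] cheb_U_neg[of m 1] by (auto simp: abs_mult)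
  next
    case False
    have "\<bar>cheb_U m x\<bar> * \<bar>sin t\<bar> = \<bar>sin ((real m + 1) * t)\<bar>"
      using cheb_U_sin[of m t] xt by (simp add: abs_mult[symmetric])
    also have "\<dots> \<le> (real m + 1) * \<bar>sin t\<bar>" using sin_mult_bound[of "Suc m" t] by (simp add: add.commute)
    finally show ?thesis using False by simp
  qed
qed

lemma cheb_U_mono_aux: assumes "x \<ge> 1" shows "0 \<le> cheb_U m x \<and> cheb_U m x \<le> cheb_U (Suc m) x"
proof (induction m)
  case 0 then show ?case using assms by simp
next
  case (Suc m)
  have "cheb_U (Suc (Suc m)) x = 2 * x * cheb_U (Suc m) x - cheb_U m x" by simp
  moreover have "2 * x * cheb_U (Suc m) x \<ge> 2 * cheb_U (Suc m) x" using Suc assms by (simp add: mult_right_mono)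
  ultimately show ?case using Suc by auto
qed

lemma cheb_U_mono_aux2: assumes "1 \<le> x" "x \<le> y"
  shows "0 \<le> cheb_U m y - cheb_U m x \<and> cheb_U m y - cheb_U m x \<le> cheb_U (Suc m) y - cheb_U (Suc m) x"
proof (induction m)
  case 0 then show ?case using assms by simp
next
  case (Suc m)
  have u: "cheb_U (Suc m) x \<ge> 0" using cheb_U_mono_aux[OF assms(1)] by blast
  have "cheb_U (Suc (Suc m)) y - cheb_U (Suc (Suc m)) x
      = 2 * y * (cheb_U (Suc m) y - cheb_U (Suc m) x) + 2 * (y - x) * cheb_U (Suc m) x - (cheb_U m y - cheb_U m x)"
    by (simp add: algebra_simps)
  moreover have "2 * y * (cheb_U (Suc m) y - cheb_U (Suc m) x) \<ge> 2 * (cheb_U (Suc m) y - cheb_U (Suc m) x)"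
  proof -
    have D0: "0 \<le> cheb_U (Suc m) y - cheb_U (Suc m) x" using Suc by linarith
    have "2 \<le> 2 * y" using assms by simp
    from mult_right_mono[OF this D0] show ?thesis .
  qed
  moreover have "2 * (y - x) * cheb_U (Suc m) x \<ge> 0" using u assms by simp
  ultimately show ?case using Suc by auto
qed

lemma cheb_U_nonneg: "x \<ge> 1 \<Longrightarrow> cheb_U m x \<ge> 0"
  using cheb_U_mono_aux by blast

lemma cheb_U_bound: assumes "\<bar>x\<bar> \<le> y" "1 \<le> y" shows "\<bar>cheb_U m x\<bar> \<le> cheb_U m y"
proof (cases "\<bar>x\<bar> \<le> 1")
  case True
  have "\<bar>cheb_U m x\<bar> \<le> real m + 1" by (rule cheb_U_le_unit[OF True])
  also have "\<dots> = cheb_U m 1" using cheb_U_1 by simp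
  also have "\<dots> \<le> cheb_U m y" using cheb_U_mono_aux2[of 1 y m] assms by simp
  finally show ?thesis .
next
  case False
  then have ax: "1 \<le> \<bar>x\<bar>" by simp
  have "\<bar>cheb_U m x\<bar> = cheb_U m \<bar>x\<bar>"
  proof (cases "x \<ge> 0")
    case True then show ?thesis using cheb_U_nonneg[OF ax] by simp
  next
    case False
    then have "\<bar>x\<bar> = -x" by simp
    then have h: "cheb_U m \<bar>x\<bar> = (-1)^m * cheb_U m x" using cheb_U_neg[of m x] by simp
    have "\<bar>cheb_U m x\<bar> = \<bar>(-1)^m * cheb_U m x\<bar>" by (simp add: abs_mult)
    also have "\<dots> = cheb_U m \<bar>x\<bar>" using h cheb_U_nonneg[OF ax, of m] by simp
    finally show ?thesis .
  qed
  also have "\<dots> \<le> cheb_U m y" using cheb_U_mono_aux2[OF ax assms(1), of m] by simp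
  finally show ?thesis .
qed


lemma cheb_T_poly: "cheb_T s = (\<lambda>x. poly (Qp s) (x - 1))"
  using poly_Qp[of s] by (auto simp: fun_eq_iff)

lemma DERIV_shift: fixes p :: "real poly" shows "((\<lambda>x. poly p (x - 1)) has_real_derivative poly (pderiv p) (x - 1)) (at x)"
proof -
  have h1: "(poly p has_real_derivative poly (pderiv p) (x-1)) (at (x-1))" by (rule poly_DERIV)
  have h2: "((\<lambda>x. x - 1) has_real_derivative 1) (at x)" by (auto intro!: derivative_eq_intros)
  from DERIV_chain2[OF h1 h2] show ?thesis by simp
qed

lemma deriv_shift: fixes p :: "real poly" shows "deriv (\<lambda>x. poly p (x - 1)) = (\<lambda>x. poly (pderiv p) (x - 1))"
proof
  fix x
  show "deriv (\<lambda>x. poly p (x - 1)) x = poly (pderiv p) (x - 1)"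
    using DERIV_shift[of p x] by (rule DERIV_imp_deriv)
qed

lemma cheb_T'_poly: "cheb_T' s x = poly (pderiv (Qp s)) (x - 1)"
  unfolding cheb_T'_def cheb_T_poly deriv_shift ..

lemma cheb_T''_poly: "cheb_T'' s x = poly (pderiv (pderiv (Qp s))) (x - 1)"
  unfolding cheb_T''_def cheb_T_poly deriv_shift ..

lemma coeffQ_nn: "coeff (Qp s) k \<ge> 0" using qprops by blast
lemma coeffQ'_nn: "coeff (pderiv (Qp s)) k \<ge> 0" by (simp add: coeff_pderiv coeffQ_nn)
lemma coeffQ''_nn: "coeff (pderiv (pderiv (Qp s))) k \<ge> 0" by (simp add: coeff_pderiv coeffQ_nn)

lemma q1: "coeff (Qp s) 1 = (real s)^2"
  using Qrec[of 0 s] q0[of s] by simp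

lemma q1': "coeff (Qp s) (Suc 0) = (real s)^2" using q1 by simp

lemma q2: "6 * coeff (Qp s) 2 = ((real s)^2 - 1) * (real s)^2"
  using Qrec[of 1 s] q1[of s] by (simp add: numeral_2_eq_2)

lemma T_ge1: "d \<ge> 0 \<Longrightarrow> cheb_T s (1 + d) \<ge> 1"
  using poly_nonneg_coeffs[of "Qp s" d] coeffQ_nn q0 poly_Qp by simp

lemma T'_ge: "d \<ge> 0 \<Longrightarrow> cheb_T' s (1 + d) \<ge> (real s)^2"
  using poly_nonneg_coeffs[of "pderiv (Qp s)" d] coeffQ'_nn
  by (simp add: cheb_T'_poly coeff_pderiv q1')

lemma T''_ge: "d \<ge> 0 \<Longrightarrow> cheb_T'' s (1 + d) \<ge> ((real s)^2 - 1) * (real s)^2 / 3"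
  using poly_nonneg_coeffs[of "pderiv (pderiv (Qp s))" d] coeffQ''_nn q2[of s]
  by (simp add: cheb_T''_poly coeff_pderiv numeral_2_eq_2)

lemma T''_pos: "d \<ge> 0 \<Longrightarrow> s \<ge> 2 \<Longrightarrow> cheb_T'' s (1 + d) > 0"
proof -
  assume d: "d \<ge> 0" and s: "s \<ge> 2"
  have "(real s)^2 \<ge> 4" using s by (metis numeral_le_real_of_nat_iff power2_eq_square real_sqrt_four real_sqrt_le_iff real_sqrt_pow2 zero_le_numeral of_nat_numeral le_trans power_mono)
  then have "(real s)^2 - 1 > 0" "(real s)^2 > 0" using s by auto
  then have "((real s)^2 - 1) * (real s)^2 / 3 > 0" by simp
  then show ?thesis using T''_ge[OF d, of s] by linarith
qed

lemma F_ineq: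
  assumes d: "d \<ge> 0"
  shows "(2 * (real s)^2 - 4/3 * (real s)^4 * d) * cheb_T s (1 + d) \<le> 2 * (1 + d) * cheb_T' s (1 + d)"
proof -
  have "poly (Fp s) d \<ge> 0" using poly_nonneg_coeffs[of "Fp s" d] Fp_coeff d by (meson order_trans)
  then show ?thesis by (simp add: Fp_def cheb_T'_poly poly_Qp algebra_simps)
qed

lemma H_ineq:
  assumes d: "d \<ge> 0" and s: "s \<ge> 1"
  shows "(2/3 * ((real s)^2 - 1) - 4/45 * (real s)^2 * ((real s)^2 - 1) * d) * cheb_T' s (1 + d) \<le> 2 * (1 + d) * cheb_T'' s (1 + d)"
proof -
  have "poly (Hp s) d \<ge> 0" using poly_nonneg_coeffs[of "Hp s" d] Hp_coeff[OF s] d by (meson order_trans)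
  then show ?thesis by (simp add: Hp_def cheb_T'_poly cheb_T''_poly algebra_simps)
qed


lemma sumU_rec:
  fixes f :: "nat \<Rightarrow> real"
  shows "(\<Sum>j=1..Suc (Suc k). f j * cheb_U (Suc (Suc k) - j) x)
    = 2 * x * (\<Sum>j=1..Suc k. f j * cheb_U (Suc k - j) x) - (\<Sum>j=1..k. f j * cheb_U (k - j) x) + f (Suc (Suc k))"
proof -
  have a: "(\<Sum>j=1..Suc (Suc k). f j * cheb_U (Suc (Suc k) - j) x)
      = (\<Sum>j=1..k. f j * cheb_U (Suc (Suc k) - j) x) + f (Suc k) * (2 * x) + f (Suc (Suc k))"
    by (simp add: Suc_diff_Suc)
  have b: "(\<Sum>j=1..Suc k. f j * cheb_U (Suc k - j) x) = (\<Sum>j=1..k. f j * cheb_U (Suc k - j) x) + f (Suc k)"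
    by simp
  have c: "(\<Sum>j=1..k. f j * cheb_U (Suc (Suc k) - j) x)
      = 2 * x * (\<Sum>j=1..k. f j * cheb_U (Suc k - j) x) - (\<Sum>j=1..k. f j * cheb_U (k - j) x)"
  proof -
    have "(\<Sum>j=1..k. f j * cheb_U (Suc (Suc k) - j) x) = (\<Sum>j=1..k. 2 * x * (f j * cheb_U (Suc k - j) x) - f j * cheb_U (k - j) x)"
    proof (intro sum.cong refl)
      fix j assume "j \<in> {1..k}"
      then have "Suc (Suc k) - j = Suc (Suc (k - j))" "Suc k - j = Suc (k - j)" by auto
      then show "f j * cheb_U (Suc (Suc k) - j) x = 2 * x * (f j * cheb_U (Suc k - j) x) - f j * cheb_U (k - j) x"
        by (simp add: algebra_simps)
    qed
    then show ?thesis by (simp add: sum_subtractf sum_distrib_left)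
  qed
  show ?thesis unfolding a b c by (simp add: algebra_simps)
qed

lemma c_identity:
  assumes b0: "\<And>j. rkc_b p s eps j \<noteq> 0"
  shows "rkc_c p s eps k = (\<Sum>j=1..k. (rkc_b p s eps k / rkc_b p s eps j * (rkc_mu p s eps j + rkc_gamma p s eps j)) * cheb_U (k - j) (rkc_omega0 s eps))"
proof -
  define b where "b = rkc_b p s eps"
  define f where "f = (\<lambda>j. (rkc_mu p s eps j + rkc_gamma p s eps j) / b j)"
  define w where "w = rkc_omega0 s eps"
  define e where "e = (\<lambda>k. \<Sum>j=1..k. f j * cheb_U (k - j) w)"
  have bnz: "b j \<noteq> 0" for j using b0 by (simp add: b_def)
  have main: "rkc_c p s eps k = b k * e k \<and> rkc_c p s eps (Suc k) = b (Suc k) * e (Suc k)"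
  proof (induction k)
    case 0
    show ?case using bnz[of 1] by (simp add: e_def f_def rkc_gamma_def)
  next
    case (Suc k)
    have er: "e (Suc (Suc k)) = 2 * w * e (Suc k) - e k + f (Suc (Suc k))"
      unfolding e_def by (rule sumU_rec)
    have "rkc_c p s eps (Suc (Suc k)) = rkc_nu p s eps (Suc (Suc k)) * (b (Suc k) * e (Suc k))
        + rkc_kappa p s eps (Suc (Suc k)) * (b k * e k) + rkc_mu p s eps (Suc (Suc k)) + rkc_gamma p s eps (Suc (Suc k))"
      using Suc by simp
    also have "\<dots> = b (Suc (Suc k)) * e (Suc (Suc k))"
      unfolding er using bnz[of k] bnz[of "Suc k"] bnz[of "Suc (Suc k)"]
      by (simp add: rkc_nu_def rkc_kappa_def f_def b_def w_def field_simps)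
    finally show ?case using Suc by simp
  qed
  have "b k * e k = (\<Sum>j=1..k. (b k / b j * (rkc_mu p s eps j + rkc_gamma p s eps j)) * cheb_U (k - j) w)"
    unfolding e_def f_def by (simp add: sum_distrib_left field_simps)
  then show ?thesis using main by (simp add: b_def w_def)
qed

lemma sum_bound:
  fixes M :: "real^'n^'n"
  assumes H: "\<And>m v. norm (cheb_U_mat m M *v v) \<le> cheb_U m w * norm v" and w: "w \<ge> 1" and k: "k \<ge> 1"
  shows "norm (\<Sum>j=1..k. a j *\<^sub>R (cheb_U_mat (k - j) M *v r j))
     \<le> (\<Sum>j=1..k. \<bar>a j\<bar> * cheb_U (k - j) w) * Max ((\<lambda>j. norm (r j)) ` {1..k})"
proof -
  let ?R = "Max ((\<lambda>j. norm (r j)) ` {1..k})"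
  have Rj: "norm (r j) \<le> ?R" if "j \<in> {1..k}" for j using that by (intro Max_ge) auto
  have "norm (\<Sum>j=1..k. a j *\<^sub>R (cheb_U_mat (k - j) M *v r j)) \<le> (\<Sum>j=1..k. norm (a j *\<^sub>R (cheb_U_mat (k - j) M *v r j)))"
    by (rule norm_sum)
  also have "\<dots> \<le> (\<Sum>j=1..k. \<bar>a j\<bar> * cheb_U (k - j) w * ?R)"
  proof (intro sum_mono)
    fix j assume j: "j \<in> {1..k}"
    have U0: "cheb_U (k - j) w \<ge> 0" using cheb_U_nonneg[OF w] by blast
    have "norm (a j *\<^sub>R (cheb_U_mat (k - j) M *v r j)) = \<bar>a j\<bar> * norm (cheb_U_mat (k - j) M *v r j)" by simp
    also have "\<dots> \<le> \<bar>a j\<bar> * (cheb_U (k - j) w * norm (r j))" by (intro mult_left_mono H) auto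
    also have "\<dots> \<le> \<bar>a j\<bar> * (cheb_U (k - j) w * ?R)" using Rj[OF j] U0 by (intro mult_left_mono) auto
    finally show "norm (a j *\<^sub>R (cheb_U_mat (k - j) M *v r j)) \<le> \<bar>a j\<bar> * cheb_U (k - j) w * ?R" by (simp add: mult.assoc)
  qed
  also have "\<dots> = (\<Sum>j=1..k. \<bar>a j\<bar> * cheb_U (k - j) w) * ?R" by (simp add: sum_distrib_right)
  finally show ?thesis .
qed

lemma Umat_bound:
  fixes A :: "real^'n^'n"
  assumes sym: "transpose A = A" and nsd: "\<forall>x. x \<bullet> (A *v x) \<le> 0" and dt: "dt > 0"
    and rho: "dt * spec_radius A \<le> beta" and w1: "w1 \<ge> 0" and wb: "w1 * beta \<le> 2 * w0" and w0: "w0 \<ge> 1"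
  shows "norm (cheb_U_mat m (w0 *\<^sub>R mat 1 + (w1 * dt) *\<^sub>R A) *v v) \<le> cheb_U m w0 * norm v"
proof (rule spectral_bound[OF sym])
  show "0 \<le> cheb_U m w0" using cheb_U_nonneg[OF w0] by blast
  fix b :: "real^'n" and l assume nb: "norm b = 1" and ev: "A *v b = l *\<^sub>R b"
  define mu where "mu = w0 + w1 * dt * l"
  have Mb: "(w0 *\<^sub>R mat 1 + (w1 * dt) *\<^sub>R A) *v b = mu *\<^sub>R b"
    by (simp add: mu_def matrix_vector_mult_add_rdistrib scaleR_matrix_vector_assoc[symmetric] ev algebra_simps)
  have b0: "b \<noteq> 0" using nb by auto
  have l0: "l \<le> 0"
  proof -
    have "b \<bullet> (A *v b) = l * (b \<bullet> b)" using ev by simp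
    moreover have "b \<bullet> b = 1" using nb by (simp add: norm_eq_1)
    ultimately show ?thesis using nsd by (metis mult.right_neutral)
  qed
  have lr: "\<bar>l\<bar> \<le> spec_radius A" by (rule spec_radius_ge[OF b0 ev])
  have up: "mu \<le> w0" using l0 w1 dt by (simp add: mu_def mult_nonneg_nonpos)
  have "w1 * dt * l \<ge> - (w1 * (dt * spec_radius A))"
  proof -
    have "dt * (- l) \<le> dt * spec_radius A" using lr dt by (intro mult_left_mono) auto
    then have "w1 * (dt * (- l)) \<le> w1 * (dt * spec_radius A)" by (rule mult_left_mono[OF _ w1])
    then show ?thesis by (simp add: algebra_simps)
  qed
  moreover have "w1 * (dt * spec_radius A) \<le> w1 * beta" by (rule mult_left_mono[OF rho w1])
  ultimately have lo: "mu \<ge> - w0" using wb by (simp add: mu_def)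
  have "\<bar>cheb_U m mu\<bar> \<le> cheb_U m w0" using up lo w0 by (intro cheb_U_bound) auto
  then show "\<exists>c. cheb_U_mat m (w0 *\<^sub>R mat 1 + (w1 * dt) *\<^sub>R A) *v b = c *\<^sub>R b \<and> \<bar>c\<bar> \<le> cheb_U m w0"
    using cheb_U_mat_eig[OF Mb, of m] by blast
qed


lemma w0_form: "rkc_omega0 s eps = 1 + eps / (real s)^2"
  by (simp add: rkc_omega0_def)

lemma coef_facts:
  fixes p s :: nat and eps :: real
  assumes hp: "p \<in> {1, 2}" and hs: "s \<ge> 1" and hs2: "p = 2 \<longrightarrow> s \<ge> 2" and heps: "eps \<ge> 0"
  shows "(\<forall>j. rkc_b p s eps j > 0) \<and> rkc_omega1 p s eps > 0
     \<and> rkc_omega1 p s eps * rkc_beta p s eps \<le> 2 * rkc_omega0 s eps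
     \<and> (\<forall>j. rkc_mu p s eps j \<ge> 0) \<and> (\<forall>j. rkc_mu p s eps j + rkc_gamma p s eps j \<ge> 0)
     \<and> rkc_omega0 s eps \<ge> 1 \<and> (p = 1 \<longrightarrow> (\<forall>j. rkc_gamma p s eps j = 0))"
proof -
  define d where "d = eps / (real s)^2"
  have d0: "d \<ge> 0" using heps by (simp add: d_def)
  have w0: "rkc_omega0 s eps = 1 + d" by (simp add: w0_form d_def)
  have sne: "(real s)^2 \<noteq> 0" using hs by simp
  have epsd: "eps = (real s)^2 * d" using sne by (simp add: d_def)
  have Tge: "cheb_T j (rkc_omega0 s eps) \<ge> 1" for j using T_ge1[OF d0] w0 by simp
  have T'pos: "cheb_T' j (rkc_omega0 s eps) > 0" if "j \<ge> 1" for j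
  proof -
    have "(real j)^2 > 0" using that by simp
    moreover have "(real j)^2 \<le> cheb_T' j (1 + d)" using T'_ge[OF d0, of j] .
    ultimately show ?thesis unfolding w0 by linarith
  qed
  have T''pos: "cheb_T'' j (rkc_omega0 s eps) > 0" if "j \<ge> 2" for j
    using T''_pos[OF d0 that] w0 by simp
  have bpos: "\<forall>j. rkc_b p s eps j > 0"
  proof
    fix j
    show "rkc_b p s eps j > 0"
    proof (cases "p = 1")
      case True
      then show ?thesis using Tge[of j] by (simp add: rkc_b_def)
    next
      case False
      have "max j 2 \<ge> 2" by simp
      then have "cheb_T'' (max j 2) (rkc_omega0 s eps) > 0" "cheb_T' (max j 2) (rkc_omega0 s eps) > 0"
        using T''pos T'pos by auto
      then show ?thesis using False by (simp add: rkc_b_def Let_def)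
    qed
  qed
  have w1pos: "rkc_omega1 p s eps > 0"
  proof (cases "p = 1")
    case True
    then show ?thesis using Tge[of s] T'pos[OF hs] by (simp add: rkc_omega1_def)
  next
    case False
    then have s2: "s \<ge> 2" using hp hs2 by auto
    then show ?thesis using False T'pos[OF hs] T''pos[OF s2] by (simp add: rkc_omega1_def)
  qed
  have wb: "rkc_omega1 p s eps * rkc_beta p s eps \<le> 2 * rkc_omega0 s eps"
  proof (cases "p = 1")
    case True
    let ?T = "cheb_T s (rkc_omega0 s eps)" and ?T' = "cheb_T' s (rkc_omega0 s eps)"
    have beta: "rkc_beta p s eps = 2 * (real s)^2 - 4/3 * (real s)^4 * d"
      using True by (simp add: rkc_beta_def epsd algebra_simps power2_eq_square power4_eq_xxxx)
    have "rkc_beta p s eps * ?T \<le> 2 * rkc_omega0 s eps * ?T'"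
      using F_ineq[OF d0, of s] unfolding beta w0 by simp
    moreover have "?T' > 0" using T'pos[OF hs] .
    ultimately show ?thesis using True by (simp add: rkc_omega1_def field_simps)
  next
    case False
    then have s2: "s \<ge> 2" using hp hs2 by auto
    let ?T' = "cheb_T' s (rkc_omega0 s eps)" and ?T'' = "cheb_T'' s (rkc_omega0 s eps)"
    have beta: "rkc_beta p s eps = 2/3 * ((real s)^2 - 1) - 4/45 * (real s)^2 * ((real s)^2 - 1) * d"
      using False by (simp add: rkc_beta_def epsd algebra_simps)
    have "rkc_beta p s eps * ?T' \<le> 2 * rkc_omega0 s eps * ?T''"
      using H_ineq[OF d0 hs] unfolding beta w0 by simp
    moreover have "?T'' > 0" using T''pos[OF s2] .
    ultimately show ?thesis using False by (simp add: rkc_omega1_def field_simps)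
  qed
  have mu: "\<forall>j. rkc_mu p s eps j \<ge> 0"
  proof
    fix j
    have a: "rkc_b p s eps j > 0" "rkc_b p s eps (j - 1) > 0" "rkc_b p s eps 1 > 0" using bpos by auto
    have "rkc_b p s eps 1 * rkc_omega1 p s eps > 0" using a w1pos by simp
    moreover have "2 * rkc_omega1 p s eps * rkc_b p s eps j / rkc_b p s eps (j - 1) > 0" using a w1pos by simp
    ultimately show "rkc_mu p s eps j \<ge> 0" unfolding rkc_mu_def by auto
  qed
  have mg: "\<forall>j. rkc_mu p s eps j + rkc_gamma p s eps j \<ge> 0"
  proof
    fix j
    show "rkc_mu p s eps j + rkc_gamma p s eps j \<ge> 0"
    proof (cases "j \<le> 1")
      case True
      then show ?thesis using mu by (simp add: rkc_gamma_def)
    next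
      case False
      have "rkc_mu p s eps j + rkc_gamma p s eps j = rkc_mu p s eps j * (rkc_b p s eps (j - 1) * cheb_T (j - 1) (rkc_omega0 s eps))"
        using False by (simp add: rkc_gamma_def rkc_a_def algebra_simps)
      moreover have "rkc_b p s eps (j - 1) * cheb_T (j - 1) (rkc_omega0 s eps) \<ge> 0"
        using bpos Tge[of "j - 1"] by (simp add: less_imp_le)
      ultimately show ?thesis using mu by simp
    qed
  qed
  have w01: "rkc_omega0 s eps \<ge> 1" using w0 d0 by simp
  have g0: "p = 1 \<longrightarrow> (\<forall>j. rkc_gamma p s eps j = 0)"
  proof (intro impI allI)
    fix j assume p1: "p = 1"
    have "cheb_T (j - 1) (rkc_omega0 s eps) \<noteq> 0" using Tge[of "j - 1"] by auto
    then have "rkc_a p s eps (j - 1) = 0" using p1 by (simp add: rkc_a_def rkc_b_def)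
    then show "rkc_gamma p s eps j = 0" by (simp add: rkc_gamma_def)
  qed
  show ?thesis using bpos w1pos wb mu mg w01 g0 by blast
qed


theorem lemma3p2:
  fixes p s :: nat and eps :: real
  assumes hp: "p \<in> {1, 2}"
    and hs: "s \<ge> 1"
    and hs2: "p = 2 \<longrightarrow> s \<ge> 2"
    and heps: "eps \<ge> 0"
  shows "(\<forall>k \<in> {1..s}. \<forall>(A :: real^'n^'n) (dt :: real) (r :: nat \<Rightarrow> real^'n).
           transpose A = A \<and> (\<forall>x. x \<bullet> (A *v x) \<le> 0) \<and> dt > 0
           \<and> dt * spec_radius A \<le> rkc_beta p s eps
           \<longrightarrow> norm (rkc_d p s eps dt A r k)
                 \<le> rkc_c p s eps k * Max ((\<lambda>j. norm (r j)) ` {1..k}))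
    \<and> (p = 1 \<longrightarrow> (\<forall>k \<in> {1..s}. \<forall>(A :: real^'n^'n) (dt :: real) (r :: nat \<Rightarrow> real^'n).
           transpose A = A \<and> (\<forall>x. x \<bullet> (A *v x) \<le> 0) \<and> dt > 0
           \<and> dt * spec_radius A \<le> rkc_beta p s eps
           \<longrightarrow> norm (rkc_dtilde p s eps dt A r k)
                 \<le> rkc_c p s eps k * Max ((\<lambda>j. norm (r j)) ` {1..k})))
    \<and> (p = 2 \<longrightarrow> (\<forall>k \<in> {1..s}. \<exists>C :: real. \<forall>(A :: real^'n^'n) (dt :: real) (r :: nat \<Rightarrow> real^'n).
           transpose A = A \<and> (\<forall>x. x \<bullet> (A *v x) \<le> 0) \<and> dt > 0
           \<and> dt * spec_radius A \<le> rkc_beta p s eps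
           \<longrightarrow> norm (rkc_dtilde p s eps dt A r k)
                 \<le> C * Max ((\<lambda>j. norm (r j)) ` {1..k})))"
proof -
  have bpos: "\<And>j. rkc_b p s eps j > 0" and w1pos: "rkc_omega1 p s eps > 0"
    and wb: "rkc_omega1 p s eps * rkc_beta p s eps \<le> 2 * rkc_omega0 s eps"
    and mu: "\<And>j. rkc_mu p s eps j \<ge> 0" and mg: "\<And>j. rkc_mu p s eps j + rkc_gamma p s eps j \<ge> 0"
    and w01: "rkc_omega0 s eps \<ge> 1" and g0: "p = 1 \<Longrightarrow> rkc_gamma p s eps j = 0" for j
    using coef_facts[OF hp hs hs2 heps] by auto
  have H: "norm (cheb_U_mat m (rkc_M p s eps dt A) *v v) \<le> cheb_U m (rkc_omega0 s eps) * norm v"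
    if "transpose A = A \<and> (\<forall>x. x \<bullet> (A *v x) \<le> 0) \<and> dt > 0 \<and> dt * spec_radius A \<le> rkc_beta p s eps"
    for m v and A :: "real^'n^'n" and dt
    unfolding rkc_M_def using that w1pos wb w01 by (intro Umat_bound) auto
  have part1: "norm (rkc_d p s eps dt A r k) \<le> rkc_c p s eps k * Max ((\<lambda>j. norm (r j)) ` {1..k})"
    if k: "k \<in> {1..s}" and hyp: "transpose A = A \<and> (\<forall>x. x \<bullet> (A *v x) \<le> 0) \<and> dt > 0 \<and> dt * spec_radius A \<le> rkc_beta p s eps"
    for k and A :: "real^'n^'n" and dt and r :: "nat \<Rightarrow> real^'n"
  proof -
    have k1: "k \<ge> 1" using k by simp
    have "norm (rkc_d p s eps dt A r k) \<le> (\<Sum>j=1..k. \<bar>rkc_b p s eps k / rkc_b p s eps j * (rkc_mu p s eps j + rkc_gamma p s eps j)\<bar> * cheb_U (k - j) (rkc_omega0 s eps)) * Max ((\<lambda>j. norm (r j)) ` {1..k})"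
      unfolding rkc_d_def by (rule sum_bound[OF H[OF hyp] w01 k1])
    also have "(\<Sum>j=1..k. \<bar>rkc_b p s eps k / rkc_b p s eps j * (rkc_mu p s eps j + rkc_gamma p s eps j)\<bar> * cheb_U (k - j) (rkc_omega0 s eps))
        = rkc_c p s eps k"
    proof -
      have "\<bar>rkc_b p s eps k / rkc_b p s eps j * (rkc_mu p s eps j + rkc_gamma p s eps j)\<bar>
          = rkc_b p s eps k / rkc_b p s eps j * (rkc_mu p s eps j + rkc_gamma p s eps j)" for j
        using bpos[of k] bpos[of j] mg[of j] by (intro abs_of_nonneg) simp
      then show ?thesis using c_identity[of p s eps k] bpos by (metis (no_types, lifting) less_irrefl sum.cong)
    qed
    finally show ?thesis .
  qed
  have part2: "p = 1 \<longrightarrow> (\<forall>k \<in> {1..s}. \<forall>(A :: real^'n^'n) (dt :: real) (r :: nat \<Rightarrow> real^'n).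
           transpose A = A \<and> (\<forall>x. x \<bullet> (A *v x) \<le> 0) \<and> dt > 0
           \<and> dt * spec_radius A \<le> rkc_beta p s eps
           \<longrightarrow> norm (rkc_dtilde p s eps dt A r k)
                 \<le> rkc_c p s eps k * Max ((\<lambda>j. norm (r j)) ` {1..k}))"
  proof (intro impI ballI allI)
    fix k and A :: "real^'n^'n" and dt and r :: "nat \<Rightarrow> real^'n" assume p1: "p = 1" and k: "k \<in> {1..s}"
      and hyp: "transpose A = A \<and> (\<forall>x. x \<bullet> (A *v x) \<le> (0::real)) \<and> dt > 0 \<and> dt * spec_radius A \<le> rkc_beta p s eps"
    have "rkc_dtilde p s eps dt A r k = rkc_d p s eps dt A r k"
      unfolding rkc_dtilde_def rkc_d_def using g0[OF p1] by simp
    then show "norm (rkc_dtilde p s eps dt A r k) \<le> rkc_c p s eps k * Max ((\<lambda>j. norm (r j)) ` {1..k})"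
      using part1[OF k hyp] by simp
  qed
  have part3: "p = 2 \<longrightarrow> (\<forall>k \<in> {1..s}. \<exists>C :: real. \<forall>(A :: real^'n^'n) (dt :: real) (r :: nat \<Rightarrow> real^'n).
           transpose A = A \<and> (\<forall>x. x \<bullet> (A *v x) \<le> 0) \<and> dt > 0
           \<and> dt * spec_radius A \<le> rkc_beta p s eps
           \<longrightarrow> norm (rkc_dtilde p s eps dt A r k)
                 \<le> C * Max ((\<lambda>j. norm (r j)) ` {1..k}))"
  proof (intro impI ballI)
    fix k assume k: "k \<in> {1..s}"
    have k1: "k \<ge> 1" using k by simp
    show "\<exists>C :: real. \<forall>(A :: real^'n^'n) (dt :: real) (r :: nat \<Rightarrow> real^'n).
           transpose A = A \<and> (\<forall>x. x \<bullet> (A *v x) \<le> 0) \<and> dt > 0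
           \<and> dt * spec_radius A \<le> rkc_beta p s eps
           \<longrightarrow> norm (rkc_dtilde p s eps dt A r k)
                 \<le> C * Max ((\<lambda>j. norm (r j)) ` {1..k})"
    proof (intro exI allI impI)
      fix A :: "real^'n^'n" and dt r
      assume hyp: "transpose A = A \<and> (\<forall>x. x \<bullet> (A *v x) \<le> 0) \<and> dt > 0 \<and> dt * spec_radius A \<le> rkc_beta p s eps"
      show "norm (rkc_dtilde p s eps dt A r k) \<le> (\<Sum>j=1..k. \<bar>rkc_b p s eps k / rkc_b p s eps j * rkc_mu p s eps j\<bar> * cheb_U (k - j) (rkc_omega0 s eps)) * Max ((\<lambda>j. norm (r j)) ` {1..k})"
        unfolding rkc_dtilde_def by (rule sum_bound[OF H[OF hyp] w01 k1])
    qed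
  qed
  show ?thesis using part1 part2 part3 by blast
qed


end
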